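(* If a graph $H$ has no isolated vertex, then its 2-subdivision graph $S_2(H)$ (with respect to any function $\alpha: L_H\to\mathbb{N}$) is a DPDP-graph.
   Context: Graphs are finite and may have multiple edges and loops. A leaf is a vertex of degree one; $L_H$ is the set of leaves of $H$. A set $D\subseteq V(G)$ is dominating if every vertex outside $D$ has a neighbor in $D$; $P$ is paired-dominating if it is dominating and the subgraph induced by $P$ has a perfect matching. A DPDP-graph is a graph $G$ admitting disjoint sets $D,P$ with $V(G)=D\cup P$, $D$ dominating and $P$ paired-dominating. 2-subdivision graph: for a graph $H$ with no isolated vertex and $\alpha:L_H\to\mathbb{N}=\{1,2,\dots\}$, $S_2(H)$ has vertex set $(V_H\setminus L_H)\cup\{(v,i): v\in L_H, 1\le i\le \alpha(v)\}$ together with two new vertices for each edge $e$ of $H$ ($u_e,v_e$ if $e$ joins $u\ne v$; $v_e^1,v_e^2$ if $e$ is a loop at $v$). Its edges are: the edge joining the two new vertices of each $e$; for $v\in V_H\setminus L_H$, $vv_e$ for each non-loop edge $e$ at $v$ and $vv_e^1,vv_e^2$ for each loop $e$ at $v$; for $v\in L_H$ with incident edge $e$, the edges $v_e(v,i)$, $1\le i\le\alpha(v)$. *)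

theory Defs
  imports Main
begin

text \<open>Multiple edges are distinct elements of E with the same
endpoint set.\<close>

definition multigraph :: "'v set \<Rightarrow> 'e set \<Rightarrow> ('e \<Rightarrow> 'v set) \<Rightarrow> bool" where
  "multigraph V E inc \<longleftrightarrow> finite V \<and> finite E \<and>
     (\<forall>e\<in>E. inc e \<subseteq> V \<and> (card (inc e) = 1 \<or> card (inc e) = 2))"

definition is_loop :: "('e \<Rightarrow> 'v set) \<Rightarrow> 'e \<Rightarrow> bool" where
  "is_loop inc e \<longleftrightarrow> card (inc e) = 1"

definition degree :: "'e set \<Rightarrow> ('e \<Rightarrow> 'v set) \<Rightarrow> 'v \<Rightarrow> nat" where
  "degree E inc v = card {e\<in>E. v \<in> inc e \<and> \<not> is_loop inc e}
                    + 2 * card {e\<in>E. inc e = {v}}"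

definition leaves :: "'v set \<Rightarrow> 'e set \<Rightarrow> ('e \<Rightarrow> 'v set) \<Rightarrow> 'v set" where
  "leaves V E inc = {v\<in>V. degree E inc v = 1}"

definition no_isolated :: "'v set \<Rightarrow> 'e set \<Rightarrow> ('e \<Rightarrow> 'v set) \<Rightarrow> bool" where
  "no_isolated V E inc \<longleftrightarrow> (\<forall>v\<in>V. degree E inc v \<noteq> 0)"

text \<open>Vertices of S_2(H): Orig v (v a non-leaf vertex), LeafCopy v i (the copy
(v,i) of a leaf v), Sub e v (the new vertex v_e of a non-loop edge e at its
endpoint v), LoopSub e i (the new vertices v_e^1, v_e^2 of a loop e).\<close>

datatype ('v, 'e) s2v = Orig 'v | LeafCopy 'v nat | Sub 'e 'v | LoopSub 'e nat

definition S2_verts :: "'v set \<Rightarrow> 'e set \<Rightarrow> ('e \<Rightarrow> 'v set) \<Rightarrow> ('v \<Rightarrow> nat)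
    \<Rightarrow> ('v, 'e) s2v set" where
  "S2_verts V E inc \<alpha> =
     Orig ` (V - leaves V E inc)
     \<union> {LeafCopy v i | v i. v \<in> leaves V E inc \<and> 1 \<le> i \<and> i \<le> \<alpha> v}
     \<union> {Sub e v | e v. e \<in> E \<and> \<not> is_loop inc e \<and> v \<in> inc e}
     \<union> {LoopSub e i | e i. e \<in> E \<and> is_loop inc e \<and> (i = 1 \<or> i = 2)}"

definition S2_edges :: "'v set \<Rightarrow> 'e set \<Rightarrow> ('e \<Rightarrow> 'v set) \<Rightarrow> ('v \<Rightarrow> nat)
    \<Rightarrow> ('v, 'e) s2v set set" where
  "S2_edges V E inc \<alpha> =
     {{Sub e u, Sub e w} | e u w. e \<in> E \<and> inc e = {u, w} \<and> u \<noteq> w}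
     \<union> {{LoopSub e 1, LoopSub e 2} | e. e \<in> E \<and> is_loop inc e}
     \<union> {{Orig v, Sub e v} | v e. v \<in> V - leaves V E inc \<and> e \<in> E
                              \<and> \<not> is_loop inc e \<and> v \<in> inc e}
     \<union> {{Orig v, LoopSub e i} | v e i. v \<in> V - leaves V E inc \<and> e \<in> E
                              \<and> inc e = {v} \<and> (i = 1 \<or> i = 2)}
     \<union> {{Sub e v, LeafCopy v i} | v e i. v \<in> leaves V E inc \<and> e \<in> E
                              \<and> v \<in> inc e \<and> 1 \<le> i \<and> i \<le> \<alpha> v}"

definition dominating :: "'a set \<Rightarrow> 'a set set \<Rightarrow> 'a set \<Rightarrow> bool" where
  "dominating VG EG D \<longleftrightarrow> D \<subseteq> VG \<and> (\<forall>x\<in>VG - D. \<exists>y\<in>D. {x, y} \<in> EG)"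

definition induced_perfect_matching :: "'a set set \<Rightarrow> 'a set \<Rightarrow> bool" where
  "induced_perfect_matching EG P \<longleftrightarrow>
     (\<exists>M. M \<subseteq> {f \<in> EG. f \<subseteq> P} \<and> (\<forall>x\<in>P. \<exists>!f. f \<in> M \<and> x \<in> f))"

definition paired_dominating :: "'a set \<Rightarrow> 'a set set \<Rightarrow> 'a set \<Rightarrow> bool" where
  "paired_dominating VG EG P \<longleftrightarrow> dominating VG EG P \<and> induced_perfect_matching EG P"

definition DPDP_graph :: "'a set \<Rightarrow> 'a set set \<Rightarrow> bool" where
  "DPDP_graph VG EG \<longleftrightarrow> (\<exists>D P. D \<inter> P = {} \<and> VG = D \<union> P \<and>
      dominating VG EG D \<and> paired_dominating VG EG P)"

end

theory Submission
  imports Defs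
begin


lemma vOrig[simp]: "Orig v \<in> S2_verts V E inc \<alpha> \<longleftrightarrow> v \<in> V \<and> v \<notin> leaves V E inc"
  unfolding S2_verts_def by auto
lemma vLeaf[simp]: "LeafCopy v i \<in> S2_verts V E inc \<alpha> \<longleftrightarrow> v \<in> leaves V E inc \<and> 1 \<le> i \<and> i \<le> \<alpha> v"
  unfolding S2_verts_def by auto
lemma vSub[simp]: "Sub e v \<in> S2_verts V E inc \<alpha> \<longleftrightarrow> e \<in> E \<and> \<not> is_loop inc e \<and> v \<in> inc e"
  unfolding S2_verts_def by auto
lemma vLoop[simp]: "LoopSub e i \<in> S2_verts V E inc \<alpha> \<longleftrightarrow> e \<in> E \<and> is_loop inc e \<and> (i = 1 \<or> i = 2)"
  unfolding S2_verts_def by auto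

lemma e1: "e \<in> E \<Longrightarrow> inc e = {u, w} \<Longrightarrow> u \<noteq> w \<Longrightarrow> {Sub e u, Sub e w} \<in> S2_edges V E inc \<alpha>"
  unfolding S2_edges_def by (rule UnI1, rule UnI1, rule UnI1, rule UnI1) blast
lemma e2: "e \<in> E \<Longrightarrow> is_loop inc e \<Longrightarrow> {LoopSub e 1, LoopSub e 2} \<in> S2_edges V E inc \<alpha>"
  unfolding S2_edges_def by (rule UnI1, rule UnI1, rule UnI1, rule UnI2) blast
lemma e3: "v \<in> V - leaves V E inc \<Longrightarrow> e \<in> E \<Longrightarrow> \<not> is_loop inc e \<Longrightarrow> v \<in> inc e \<Longrightarrow> {Orig v, Sub e v} \<in> S2_edges V E inc \<alpha>"
  unfolding S2_edges_def by (rule UnI1, rule UnI1, rule UnI2) blast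
lemma e4: "v \<in> V - leaves V E inc \<Longrightarrow> e \<in> E \<Longrightarrow> inc e = {v} \<Longrightarrow> i = 1 \<or> i = 2 \<Longrightarrow> {Orig v, LoopSub e i} \<in> S2_edges V E inc \<alpha>"
  unfolding S2_edges_def by (rule UnI1, rule UnI2) blast
lemma e5: "v \<in> leaves V E inc \<Longrightarrow> e \<in> E \<Longrightarrow> v \<in> inc e \<Longrightarrow> 1 \<le> i \<Longrightarrow> i \<le> \<alpha> v \<Longrightarrow> {Sub e v, LeafCopy v i} \<in> S2_edges V E inc \<alpha>"
  unfolding S2_edges_def by (rule UnI2) blast

fun isDL :: "('v,'e) s2v \<Rightarrow> bool" where
  "isDL (Orig _) = True" | "isDL (LeafCopy _ _) = True"
| "isDL (Sub _ _) = False" | "isDL (LoopSub _ _) = False"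

lemma nonleaf_edge:
  assumes "multigraph V E inc" "no_isolated V E inc" "v \<in> V"
  shows "\<exists>e\<in>E. (\<not> is_loop inc e \<and> v \<in> inc e) \<or> inc e = {v}"
proof -
  have "degree E inc v \<noteq> 0" using assms unfolding no_isolated_def by auto
  hence "{e\<in>E. v \<in> inc e \<and> \<not> is_loop inc e} \<noteq> {} \<or> {e\<in>E. inc e = {v}} \<noteq> {}"
    unfolding degree_def by (metis card.empty mult_0_right add_0)
  thus ?thesis by blast
qed

lemma leaf_edge:
  assumes "v \<in> leaves V E inc"
  shows "\<exists>e\<in>E. \<not> is_loop inc e \<and> v \<in> inc e"
proof -
  have "degree E inc v = 1" using assms unfolding leaves_def by auto
  hence "card {e\<in>E. v \<in> inc e \<and> \<not> is_loop inc e} = 1"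
    unfolding degree_def by presburger
  hence "{e\<in>E. v \<in> inc e \<and> \<not> is_loop inc e} \<noteq> {}" by force
  thus ?thesis by blast
qed

lemma loop_vertex:
  assumes "multigraph V E inc" "e \<in> E" "is_loop inc e"
  shows "\<exists>v. inc e = {v} \<and> v \<in> V \<and> v \<notin> leaves V E inc"
proof -
  obtain v where v: "inc e = {v}" using assms(3) unfolding is_loop_def
    by (metis card_1_singletonE)
  have fin: "finite E" using assms(1) unfolding multigraph_def by auto
  have "e \<in> {e\<in>E. inc e = {v}}" using v assms(2) by auto
  hence "card {e\<in>E. inc e = {v}} \<noteq> 0" using fin by (metis (no_types, lifting) card_0_eq empty_iff finite_subset mem_Collect_eq subsetI)
  hence "degree E inc v \<noteq> 1" unfolding degree_def by linarith
  moreover have "v \<in> V" using assms(1,2) v unfolding multigraph_def by auto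
  ultimately show ?thesis using v unfolding leaves_def by auto
qed

lemma nonloop_other:
  assumes "multigraph V E inc" "e \<in> E" "\<not> is_loop inc e" "v \<in> inc e"
  shows "\<exists>w. w \<noteq> v \<and> inc e = {v, w} \<and> w \<in> V \<and> v \<in> V"
proof -
  have c: "card (inc e) = 2" and sub: "inc e \<subseteq> V"
    using assms unfolding multigraph_def is_loop_def by auto
  then obtain a b where ab: "inc e = {a, b}" "a \<noteq> b" by (meson card_2_iff)
  show ?thesis
  proof (cases "v = a")
    case True thus ?thesis using ab sub by auto
  next
    case False hence "v = b" using ab assms(4) by auto
    thus ?thesis using ab sub False by auto
  qed
qed

theorem proposition4p4:
  fixes V :: "'v set" and E :: "'e set" and inc :: "'e \<Rightarrow> 'v set" and \<alpha> :: "'v \<Rightarrow> nat"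
  assumes "multigraph V E inc"
    and "no_isolated V E inc"
    and "\<forall>v\<in>leaves V E inc. \<alpha> v \<ge> 1"
  shows "DPDP_graph (S2_verts V E inc \<alpha>) (S2_edges V E inc \<alpha>)"
proof -
  let ?VG = "S2_verts V E inc \<alpha>"
  let ?EG = "S2_edges V E inc \<alpha>"
  let ?L = "leaves V E inc"
  define D where "D = {x\<in>?VG. isDL x}"
  define P where "P = {x\<in>?VG. \<not> isDL x}"
  have disj: "D \<inter> P = {}" and un: "?VG = D \<union> P" unfolding D_def P_def by auto
  have domD: "dominating ?VG ?EG D"
    unfolding dominating_def
  proof (intro conjI ballI)
    show "D \<subseteq> ?VG" unfolding D_def by auto
  next
    fix x assume x: "x \<in> ?VG - D"
    hence xv: "x \<in> ?VG" and nd: "\<not> isDL x" unfolding D_def by auto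
    show "\<exists>y\<in>D. {x, y} \<in> ?EG"
    proof (cases x)
      case (Orig v) thus ?thesis using nd by simp
    next
      case (LeafCopy v i) thus ?thesis using nd by simp
    next
      case (Sub e v)
      hence ev: "e \<in> E" "\<not> is_loop inc e" "v \<in> inc e" using xv  by auto
      have vV: "v \<in> V" using nonloop_other[OF assms(1) ev] by blast
      show ?thesis
      proof (cases "v \<in> ?L")
        case True
        have "LeafCopy v 1 \<in> D" using True assms(3) unfolding D_def by auto
        moreover have "{x, LeafCopy v 1} \<in> ?EG" unfolding Sub
          using e5[OF True ev(1,3)] True assms(3) by simp
        ultimately show ?thesis by blast
      next
        case False
        have "Orig v \<in> D" using False vV unfolding D_def by auto
        moreover have "{x, Orig v} \<in> ?EG" unfolding Sub
          using e3[of v V E inc e \<alpha>] False ev vV by (simp add: insert_commute)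
        ultimately show ?thesis by blast
      qed
    next
      case (LoopSub e i)
      hence ei: "e \<in> E" "is_loop inc e" "i = 1 \<or> i = 2" using xv  by auto
      obtain v where v: "inc e = {v}" "v \<in> V" "v \<notin> ?L" using loop_vertex[OF assms(1) ei(1,2)] by blast
      have "Orig v \<in> D" using v unfolding D_def by auto
      moreover have "{x, Orig v} \<in> ?EG" unfolding LoopSub
        using e4[of v V E inc e i \<alpha>] ei v by (simp add: insert_commute)
      ultimately show ?thesis by blast
    qed
  qed
  have domP: "dominating ?VG ?EG P"
    unfolding dominating_def
  proof (intro conjI ballI)
    show "P \<subseteq> ?VG" unfolding P_def by auto
  next
    fix x assume x: "x \<in> ?VG - P"
    hence xv: "x \<in> ?VG" and nd: "isDL x" unfolding P_def by auto
    show "\<exists>y\<in>P. {x, y} \<in> ?EG"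
    proof (cases x)
      case (Orig v)
      hence vV: "v \<in> V" "v \<notin> ?L" using xv  by auto
      from nonleaf_edge[OF assms(1,2) vV(1)] obtain e where
        e: "e \<in> E" "(\<not> is_loop inc e \<and> v \<in> inc e) \<or> inc e = {v}" by blast
      show ?thesis
      proof (cases "\<not> is_loop inc e \<and> v \<in> inc e")
        case True
        have "Sub e v \<in> P" using True e unfolding P_def by auto
        moreover have "{x, Sub e v} \<in> ?EG" unfolding Orig
          using e3[of v V E inc e \<alpha>] True e vV by simp
        ultimately show ?thesis by blast
      next
        case False
        hence ie: "inc e = {v}" using e by auto
        hence lp: "is_loop inc e" unfolding is_loop_def by simp
        have "LoopSub e 1 \<in> P" using lp e unfolding P_def by auto
        moreover have "{x, LoopSub e 1} \<in> ?EG" unfolding Orig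
          using e4[of v V E inc e 1 \<alpha>] ie e vV by simp
        ultimately show ?thesis by blast
      qed
    next
      case (LeafCopy v i)
      hence vL: "v \<in> ?L" "1 \<le> i" "i \<le> \<alpha> v" using xv  by auto
      obtain e where e: "e \<in> E" "\<not> is_loop inc e" "v \<in> inc e" using leaf_edge[OF vL(1)] by blast
      have "Sub e v \<in> P" using e unfolding P_def by auto
      moreover have "{x, Sub e v} \<in> ?EG" unfolding LeafCopy
        using e5[of v V E inc e i \<alpha>] vL e by (simp add: insert_commute)
      ultimately show ?thesis by blast
    next
      case (Sub e v) thus ?thesis using nd by simp
    next
      case (LoopSub e i) thus ?thesis using nd by simp
    qed
  qed
  define M where "M = {{Sub e u, Sub e w} | e u w. e \<in> E \<and> inc e = {u, w} \<and> u \<noteq> w}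
     \<union> {{LoopSub e 1, LoopSub e 2} | e. e \<in> E \<and> is_loop inc e}"
  have Mcases: "\<And>f. f \<in> M \<Longrightarrow>
      (\<exists>e u w. f = {Sub e u, Sub e w} \<and> e \<in> E \<and> inc e = {u, w} \<and> u \<noteq> w) \<or>
      (\<exists>e. f = {LoopSub e 1, LoopSub e 2} \<and> e \<in> E \<and> is_loop inc e)"
    unfolding M_def by blast
  have pm: "induced_perfect_matching ?EG P"
    unfolding induced_perfect_matching_def
  proof (intro exI[of _ M] conjI ballI)
    show "M \<subseteq> {f \<in> ?EG. f \<subseteq> P}"
    proof
      fix f assume f: "f \<in> M"
      from Mcases[OF f] show "f \<in> {f \<in> ?EG. f \<subseteq> P}"
      proof (elim disjE exE conjE)
        fix e u w assume h: "f = {Sub e u, Sub e w}" "e \<in> E" "inc e = {u, w}" "u \<noteq> w"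
        hence nl: "\<not> is_loop inc e" unfolding is_loop_def by simp
        have "f \<in> ?EG" using e1[of e E inc u w V \<alpha>] h by simp
        moreover have "f \<subseteq> P" using h nl unfolding P_def by auto
        ultimately show ?thesis by simp
      next
        fix e assume h: "f = {LoopSub e 1, LoopSub e 2}" "e \<in> E" "is_loop inc e"
        have "f \<in> ?EG" using e2[of e E inc V \<alpha>] h by simp
        moreover have "f \<subseteq> P" using h unfolding P_def by auto
        ultimately show ?thesis by simp
      qed
    qed
  next
    fix x assume xP: "x \<in> P"
    hence xv: "x \<in> ?VG" and nd: "\<not> isDL x" unfolding P_def by auto
    show "\<exists>!f. f \<in> M \<and> x \<in> f"
    proof (cases x)
      case (Orig v) thus ?thesis using nd by simp
    next
      case (LeafCopy v i) thus ?thesis using nd by simp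
    next
      case (Sub e v)
      hence ev: "e \<in> E" "\<not> is_loop inc e" "v \<in> inc e" using xv by auto
      obtain w where w: "w \<noteq> v" "inc e = {v, w}" using nonloop_other[OF assms(1) ev] by blast
      show ?thesis
      proof (rule ex1I[of _ "{Sub e v, Sub e w}"])
        have "{Sub e v, Sub e w} \<in> M" unfolding M_def using w ev(1) by blast
        thus "{Sub e v, Sub e w} \<in> M \<and> x \<in> {Sub e v, Sub e w}" using Sub by simp
      next
        fix f assume f: "f \<in> M \<and> x \<in> f"
        from Mcases[OF conjunct1[OF f]] show "f = {Sub e v, Sub e w}"
        proof (elim disjE exE conjE)
          fix e' u' w' assume h: "f = {Sub e' u', Sub e' w'}" "e' \<in> E" "inc e' = {u', w'}" "u' \<noteq> w'"
          have ee: "e' = e" using f h(1) Sub by auto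
          have "f = Sub e ` inc e'" using h(1,3) ee by simp
          thus ?thesis using w ee by simp
        next
          fix e' assume h: "f = {LoopSub e' 1, LoopSub e' 2}"
          thus ?thesis using f Sub by auto
        qed
      qed
    next
      case (LoopSub e i)
      hence ei: "e \<in> E" "is_loop inc e" "i = 1 \<or> i = 2" using xv by auto
      show ?thesis
      proof (rule ex1I[of _ "{LoopSub e 1, LoopSub e 2}"])
        have "{LoopSub e 1, LoopSub e 2} \<in> M" unfolding M_def using ei by blast
        thus "{LoopSub e 1, LoopSub e 2} \<in> M \<and> x \<in> {LoopSub e 1, LoopSub e 2}"
          using LoopSub ei(3) by auto
      next
        fix f assume f: "f \<in> M \<and> x \<in> f"
        from Mcases[OF conjunct1[OF f]] show "f = {LoopSub e 1, LoopSub e 2}"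
        proof (elim disjE exE conjE)
          fix e' u' w' assume h: "f = {Sub e' u', Sub e' w'}"
          thus ?thesis using f LoopSub by auto
        next
          fix e' assume h: "f = {LoopSub e' 1, LoopSub e' 2}"
          thus ?thesis using f LoopSub by auto
        qed
      qed
    qed
  qed
  show ?thesis unfolding DPDP_graph_def paired_dominating_def
    by (intro exI[of _ D] exI[of _ P] conjI disj un domD domP pm)
qed

end
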